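(* Let $O_1,\dots,O_m\subset\mathbb{R}^2$ be nonempty, closed, convex obstacles with $\eta:=\min_{i\neq l} d(O_i,O_l)$ satisfying $\eta>2(r+\rho_{\max})$, and let $0<\epsilon<\tfrac12\left[\eta-2(r+\rho_{\max})\right]$. Let $x\in\mathbb{R}^2$ satisfy $0<\delta(x)<\epsilon$, and let $j$ be the (unique) index of the obstacle nearest to $x$. Then: (i) $x$ lies in the interior of the wall following local free space $\mathcal{LF}_w(x)=\mathcal{LF}(x)\cap\mathcal{D}_w(x)$; (ii) $\mathcal{LF}_w(x)=\mathcal{D}_w(x)\cap H_j(x)$, where $H_j(x)=\{q\in\mathbb{R}^2:\ (q-x_h(x))\cdot n_w(x)\ge 0\}$ with $x_h(x)=x-\tfrac12\delta(x)\,n_w(x)$; (iii) the point $x_p(x)$ lies on the boundary of $\mathcal{LF}_w(x)$.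
   Context: Setting: a disk-shaped robot of radius $r>0$ centered at $x\in\mathbb{R}^2$; $\rho_{\max}>0$ is the largest radius among the movable disk-shaped objects. $d(A,B)=\inf\{\|a-b\|: a\in A, b\in B\}$, $d(x,A)=d(\{x\},A)$, and $\Pi_A(x)$ is the (unique) nearest point of a closed convex set $A$ to $x$. Define $\delta(x):=\min_i d(x,O_i)-r$ (this equals the distance $d(x,\partial\mathcal F)$ from $x$ to the boundary of the free space $\mathcal F=\{x: d(x,O_i)\ge r\ \forall i\}$ when $x\in\mathcal F$; it is also the LIDAR quantity $\min_\theta\rho_x(\theta)-r$ when the sensing range is large enough). For $x\notin O_i$ let $n_i(x):=(x-\Pi_{O_i}(x))/\|x-\Pi_{O_i}(x)\|$ and $d_i:=d(x,O_i)$, and define the half-plane $H_i(x):=\{q:\ (q-x+\tfrac12(d_i-r)n_i(x))\cdot n_i(x)\ge 0\}$ (the max-margin separating half-plane between the robot disk and $O_i$, eroded by $r$). The local free space is $\mathcal{LF}(x):=\bigcap_{i=1}^m H_i(x)$ (a convex set). When the nearest obstacle $O_j$ to $x$ is unique, set $n_w(x):=n_j(x)$, $t_w(x):=J n_w(x)$ with $J=\begin{bmatrix}0&-1\\1&0\end{bmatrix}$, $x_{\mathrm{offset}}(x):=x-\delta(x)\,n_w(x)$, the offset disk $\mathcal D_w(x):=\{p:\|p-x_{\mathrm{offset}}(x)\|\le\epsilon\}$, the wall following local free space $\mathcal{LF}_w(x):=\mathcal{LF}(x)\cap\mathcal D_w(x)$, and, for a fixed direction parameter $a\in\{-1,1\}$,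 the wall following goal $x_p(x):=x_{\mathrm{offset}}(x)+\tfrac{\epsilon}{2}n_w(x)+a\tfrac{\epsilon\sqrt3}{2}t_w(x)$. *)

theory Defs
  imports "HOL-Analysis.Analysis"
begin

type_synonym pt = "real \<times> real"

text \<open>Obstacles are Obs 0, ..., Obs (m-1). Robot radius r.\<close>

definition Jrot :: "pt \<Rightarrow> pt" where
  "Jrot v = (- snd v, fst v)"

definition delta :: "(nat \<Rightarrow> pt set) \<Rightarrow> nat \<Rightarrow> real \<Rightarrow> pt \<Rightarrow> real" where
  "delta Obs m r x = Min ((\<lambda>i. infdist x (Obs i)) ` {..<m}) - r"

definition nvec :: "pt set \<Rightarrow> pt \<Rightarrow> pt" where
  "nvec A x = (1 / norm (x - closest_point A x)) *\<^sub>R (x - closest_point A x)"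

definition Hplane :: "pt set \<Rightarrow> real \<Rightarrow> pt \<Rightarrow> pt set" where
  "Hplane A r x = {q. (q - x + ((infdist x A - r) / 2) *\<^sub>R nvec A x) \<bullet> nvec A x \<ge> 0}"

definition LF :: "(nat \<Rightarrow> pt set) \<Rightarrow> nat \<Rightarrow> real \<Rightarrow> pt \<Rightarrow> pt set" where
  "LF Obs m r x = (\<Inter>i\<in>{..<m}. Hplane (Obs i) r x)"

text \<open>j is the index of the nearest obstacle.\<close>

definition x_offset :: "(nat \<Rightarrow> pt set) \<Rightarrow> nat \<Rightarrow> real \<Rightarrow> nat \<Rightarrow> pt \<Rightarrow> pt" where
  "x_offset Obs m r j x = x - delta Obs m r x *\<^sub>R nvec (Obs j) x"

definition Dw :: "(nat \<Rightarrow> pt set) \<Rightarrow> nat \<Rightarrow> real \<Rightarrow> real \<Rightarrow> nat \<Rightarrow> pt \<Rightarrow> pt set" where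
  "Dw Obs m r \<epsilon> j x = cball (x_offset Obs m r j x) \<epsilon>"

definition LFw :: "(nat \<Rightarrow> pt set) \<Rightarrow> nat \<Rightarrow> real \<Rightarrow> real \<Rightarrow> nat \<Rightarrow> pt \<Rightarrow> pt set" where
  "LFw Obs m r \<epsilon> j x = LF Obs m r x \<inter> Dw Obs m r \<epsilon> j x"

definition x_p :: "(nat \<Rightarrow> pt set) \<Rightarrow> nat \<Rightarrow> real \<Rightarrow> real \<Rightarrow> real \<Rightarrow> nat \<Rightarrow> pt \<Rightarrow> pt" where
  "x_p Obs m r \<epsilon> a j x = x_offset Obs m r j x + (\<epsilon> / 2) *\<^sub>R nvec (Obs j) x
      + (a * \<epsilon> * sqrt 3 / 2) *\<^sub>R Jrot (nvec (Obs j) x)"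

end

theory Submission imports Defs begin
lemma key_ineq:
  fixes A B di r \<epsilon> :: real
  assumes "A > r + \<epsilon>" "A \<ge> di - \<epsilon>" "B \<le> \<epsilon>" "B \<ge> 0" "r > 0" "di > 0"
  shows "A^2 - B^2 - r * di \<ge> 0"
proof (cases "di \<le> r + 2*\<epsilon>")
  case True
  have "A^2 \<ge> (r+\<epsilon>)^2" using assms by (intro power_mono) auto
  moreover have "B^2 \<le> \<epsilon>^2" using assms by (intro power_mono) auto
  moreover have "r * di \<le> r * (r + 2*\<epsilon>)" using True assms by simp
  ultimately show ?thesis by (simp add: power2_eq_square algebra_simps)
next
  case False
  have "A^2 \<ge> (di-\<epsilon>)^2" using assms False by (intro power_mono) auto
  moreover have "B^2 \<le> \<epsilon>^2" using assms by (intro power_mono) auto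
  moreover have "r * di \<le> (di - 2*\<epsilon>) * di" using False assms by simp
  ultimately show ?thesis by (simp add: power2_eq_square algebra_simps)
qed

lemma inner_gen: "(a + k *\<^sub>R (c *\<^sub>R w)) \<bullet> (c *\<^sub>R w) = c * (a \<bullet> w) + k * c * c * (w \<bullet> (w::'a::real_inner))"
  by (simp add: inner_add_left algebra_simps)

lemma key:
  fixes x pj pI q n :: "'a::real_inner"
  assumes n1: "norm n = 1" and xpj: "x - pj = (r+\<delta>) *\<^sub>R n" and r: "r>0" and d: "\<delta>>0"
    and qc: "norm (q - (x - \<delta> *\<^sub>R n)) \<le> \<epsilon>" and qh: "(q - (x - (\<delta>/2) *\<^sub>R n)) \<bullet> n \<ge> 0"
    and di: "norm (x - pI) = di" "di > 0" and far: "norm (pI - pj) > 2*r + 2*\<epsilon>"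
  shows "(q - x + ((di - r)/2) *\<^sub>R ((1/di) *\<^sub>R (x - pI))) \<bullet> ((1/di) *\<^sub>R (x - pI)) \<ge> 0"
proof -
  define u where "u = q - (x - \<delta> *\<^sub>R n)"
  have nn: "n \<bullet> n = 1" using n1 by (simp add: norm_eq_1)
  have un: "u \<bullet> n \<ge> \<delta>/2" using qh unfolding u_def by (simp add: algebra_simps inner_diff_left nn)
  have qx: "q - x = u - \<delta> *\<^sub>R n" unfolding u_def by simp
  have "(norm (q - x))^2 = (norm u)^2 - 2*\<delta>*(u \<bullet> n) + \<delta>^2"
    unfolding qx power2_norm_eq_inner by (simp add: inner_diff_left inner_diff_right nn inner_commute power2_eq_square)
  also have "\<dots> \<le> \<epsilon>^2"
  proof -
    have "(norm u)^2 \<le> \<epsilon>^2" using qc u_def by (intro power_mono) auto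
    moreover have "2*\<delta>*(u \<bullet> n) \<ge> \<delta>^2" using un d by (simp add: power2_eq_square)
    ultimately show ?thesis by linarith
  qed
  finally have hB2: "(norm (q - x))^2 \<le> \<epsilon>^2" .
  have e0: "\<epsilon> \<ge> 0" using qc norm_ge_zero order_trans by blast
  have hB: "norm (q - x) \<le> \<epsilon>" using hB2 e0 by (meson norm_ge_zero power2_le_imp_le)
  have "q - pj = u + r *\<^sub>R n" unfolding u_def using xpj by (simp add: algebra_simps)
  hence hpj: "norm (q - pj) \<le> r + \<epsilon>" using qc u_def r n1
  proof -
    have "norm (u + r *\<^sub>R n) \<le> norm u + norm (r *\<^sub>R n)" by (rule norm_triangle_ineq)
    also have "norm (r *\<^sub>R n) = r" using r n1 by simp
    finally have "norm (u + r *\<^sub>R n) \<le> norm u + r" .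
    moreover have "norm u \<le> \<epsilon>" using qc u_def by simp
    ultimately show ?thesis unfolding \<open>q - pj = u + r *\<^sub>R n\<close> by linarith
  qed
  have "norm (pI - pj) \<le> norm (q - pI) + norm (q - pj)"
    using norm_triangle_ineq4[of "q - pj" "q - pI"] by (simp add: norm_minus_commute)
  hence hA1: "norm (q - pI) > r + \<epsilon>" using far hpj by linarith
  have "di \<le> norm (q - pI) + norm (q - x)" using di
    using norm_triangle_ineq4[of "q - pI" "q - x"] by (simp add: norm_minus_commute)
  hence hA2: "norm (q - pI) \<ge> di - \<epsilon>" using hB by linarith
  have ki: "(norm (q-pI))^2 - (norm (q-x))^2 - r * di \<ge> 0"
    by (rule key_ineq[OF hA1 hA2 hB norm_ge_zero r di(2)])
  have id: "(q - x) \<bullet> (x - pI) = ((norm (q-pI))^2 - (norm (q-x))^2 - di^2)/2"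
    using dot_norm[of "q - x" "x - pI"] di by simp
  have xx: "(x - pI) \<bullet> (x - pI) = di^2" using di(1) power2_norm_eq_inner[of "x - pI"] by simp
  have "(q - x + ((di - r)/2) *\<^sub>R ((1/di) *\<^sub>R (x - pI))) \<bullet> ((1/di) *\<^sub>R (x - pI))
      = ((q - x) \<bullet> (x - pI)) / di + (di - r)/2"
  proof -
    have "(q - x + ((di - r)/2) *\<^sub>R ((1/di) *\<^sub>R (x - pI))) \<bullet> ((1/di) *\<^sub>R (x - pI))
       = (1/di) * ((q - x) \<bullet> (x - pI)) + ((di - r)/2) * (1/di) * (1/di) * ((x - pI) \<bullet> (x - pI))"
      by (rule inner_gen)
    moreover have "(1/di) * P + ((di - r)/2) * (1/di) * (1/di) * (di^2) = P / di + (di - r)/2" for P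
      using di(2) by (simp add: power2_eq_square field_simps)
    ultimately show ?thesis unfolding xx by simp
  qed
  also have "\<dots> = ((norm (q-pI))^2 - (norm (q-x))^2 - r * di) / (2*di)"
    using di(2) unfolding id by (simp add: field_simps power2_eq_square)
  also have "\<dots> \<ge> 0" using ki di(2) by simp
  finally show ?thesis .
qed
lemma Jrot_inner: "Jrot v \<bullet> v = 0" "Jrot v \<bullet> Jrot v = v \<bullet> v"
  by (cases v; simp add: Jrot_def)+

lemma dist_closest_infdist:
  assumes "closed S" "S \<noteq> {}"
  shows "infdist x S = norm (x - closest_point S x)"
  using setdist_closest_point[OF assms, of x] by (simp add: infdist_eq_setdist dist_norm)

theorem lemma1:
  fixes Obs :: "nat \<Rightarrow> pt set" and m :: nat and r \<rho>max \<epsilon> a :: real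
    and x :: pt and j :: nat
  assumes "m \<ge> 1"
    and "\<And>i. i < m \<Longrightarrow> Obs i \<noteq> {} \<and> closed (Obs i) \<and> convex (Obs i)"
    and "r > 0" and "\<rho>max > 0"
    and "\<And>i l. i < m \<Longrightarrow> l < m \<Longrightarrow> i \<noteq> l \<Longrightarrow> setdist (Obs i) (Obs l) > 2 * (r + \<rho>max)"
    and "\<epsilon> > 0"
    and "\<And>i l. i < m \<Longrightarrow> l < m \<Longrightarrow> i \<noteq> l \<Longrightarrow>
           \<epsilon> < (setdist (Obs i) (Obs l) - 2 * (r + \<rho>max)) / 2"
    and "a \<in> {-1, 1}"
    and "0 < delta Obs m r x" and "delta Obs m r x < \<epsilon>"
    and "j < m" and "\<And>i. i < m \<Longrightarrow> infdist x (Obs j) \<le> infdist x (Obs i)"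
  shows "x \<in> interior (LFw Obs m r \<epsilon> j x) \<and>
    LFw Obs m r \<epsilon> j x = Dw Obs m r \<epsilon> j x \<inter>
           {q. (q - (x - (delta Obs m r x / 2) *\<^sub>R nvec (Obs j) x)) \<bullet> nvec (Obs j) x \<ge> 0} \<and>
    x_p Obs m r \<epsilon> a j x \<in> frontier (LFw Obs m r \<epsilon> j x)"
proof -
  note obs = assms(2)
  define pj where "pj = closest_point (Obs j) x"
  define dj where "dj = infdist x (Obs j)"
  define \<delta> where "\<delta> = delta Obs m r x"
  define n where "n = nvec (Obs j) x"
  define c where "c = x_offset Obs m r j x"
  define Hj where "Hj = {q. (q - (x - (\<delta> / 2) *\<^sub>R n)) \<bullet> n \<ge> 0}"
  have r: "r > 0" and e: "\<epsilon> > 0" and d0: "\<delta> > 0" and de: "\<delta> < \<epsilon>"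
    using assms unfolding \<delta>_def by auto
  have hmin: "Min ((\<lambda>i. infdist x (Obs i)) ` {..<m}) = dj"
    unfolding dj_def using assms(11,12) by (intro Min_eqI) auto
  have hdel: "\<delta> = dj - r" unfolding \<delta>_def delta_def hmin ..
  have hdj: "dj = norm (x - pj)" unfolding dj_def pj_def
    using obs[OF assms(11)] by (intro dist_closest_infdist) auto
  have dj0: "dj > 0" using hdel d0 r by linarith
  have ndef: "n = (1/dj) *\<^sub>R (x - pj)" unfolding n_def nvec_def hdj pj_def ..
  have xpj: "x - pj = dj *\<^sub>R n" using dj0 unfolding ndef by simp
  have n1: "norm n = 1"
  proof -
    have "norm n = \<bar>1/dj\<bar> * norm (x - pj)" unfolding ndef by simp
    also have "\<dots> = 1" using dj0 hdj by simp
    finally show ?thesis .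
  qed
  have nn: "n \<bullet> n = 1" using n1 by (simp add: norm_eq_1)
  have cdef: "c = x - \<delta> *\<^sub>R n" unfolding c_def x_offset_def \<delta>_def n_def ..
  have Dw: "Dw Obs m r \<epsilon> j x = cball c \<epsilon>" unfolding Dw_def c_def ..
  have HjH: "Hplane (Obs j) r x = Hj"
    unfolding Hplane_def Hj_def n_def[symmetric] dj_def[symmetric] hdel
    by (simp add: algebra_simps)
  have other: "q \<in> Hplane (Obs i) r x"
    if i: "i < m" "i \<noteq> j" and q: "q \<in> cball c \<epsilon>" "q \<in> Hj" for i q
  proof -
    define pI where "pI = closest_point (Obs i) x"
    define di where "di = infdist x (Obs i)"
    have hdi: "di = norm (x - pI)" unfolding di_def pI_def
      using obs[OF i(1)] by (intro dist_closest_infdist) auto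
    have di0: "di > 0" using assms(12)[OF i(1)] dj0 unfolding di_def dj_def by linarith
    have pii: "pI \<in> Obs i" unfolding pI_def using obs[OF i(1)] closest_point_in_set by blast
    have pjj: "pj \<in> Obs j" unfolding pj_def using obs[OF assms(11)] closest_point_in_set by blast
    have "setdist (Obs i) (Obs j) \<le> norm (pI - pj)"
      using setdist_le_dist[OF pii pjj] by (simp add: dist_norm)
    moreover have "\<epsilon> < (setdist (Obs i) (Obs j) - 2 * (r + \<rho>max)) / 2"
      using assms(7)[OF i(1) assms(11) i(2)] .
    ultimately have far: "norm (pI - pj) > 2*r + 2*\<epsilon>" using assms(4) by (simp add: field_simps)
    have qc: "norm (q - (x - \<delta> *\<^sub>R n)) \<le> \<epsilon>"
      using q(1) unfolding cdef by (simp add: dist_norm norm_minus_commute)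
    have qh: "(q - (x - (\<delta>/2) *\<^sub>R n)) \<bullet> n \<ge> 0" using q(2) unfolding Hj_def by simp
    have xpj': "x - pj = (r + \<delta>) *\<^sub>R n" using xpj hdel by simp
    have "(q - x + ((di - r)/2) *\<^sub>R ((1/di) *\<^sub>R (x - pI))) \<bullet> ((1/di) *\<^sub>R (x - pI)) \<ge> 0"
      by (rule key[OF n1 xpj' r d0 qc qh hdi[symmetric] di0 far])
    then show ?thesis unfolding Hplane_def nvec_def di_def[symmetric] pI_def[symmetric] hdi[symmetric]
      by simp
  qed
  have eq: "LFw Obs m r \<epsilon> j x = cball c \<epsilon> \<inter> Hj"
  proof
    show "LFw Obs m r \<epsilon> j x \<subseteq> cball c \<epsilon> \<inter> Hj"
      unfolding LFw_def LF_def Dw using assms(11) HjH by blast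
    show "cball c \<epsilon> \<inter> Hj \<subseteq> LFw Obs m r \<epsilon> j x"
    proof
      fix q assume q: "q \<in> cball c \<epsilon> \<inter> Hj"
      have "q \<in> Hplane (Obs i) r x" if "i < m" for i
        using other[OF that _ ] q HjH by (cases "i = j") auto
      then show "q \<in> LFw Obs m r \<epsilon> j x" unfolding LFw_def LF_def Dw using q by blast
    qed
  qed
  have int: "x \<in> interior (cball c \<epsilon> \<inter> Hj)"
    unfolding mem_interior
  proof (intro exI conjI)
    show "min (\<epsilon> - \<delta>) (\<delta>/2) > 0" using d0 de by simp
    show "ball x (min (\<epsilon> - \<delta>) (\<delta>/2)) \<subseteq> cball c \<epsilon> \<inter> Hj"
    proof
      fix y assume "y \<in> ball x (min (\<epsilon> - \<delta>) (\<delta>/2))"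
      hence y: "norm (y - x) < \<epsilon> - \<delta>" "norm (y - x) < \<delta>/2"
        by (auto simp: dist_norm norm_minus_commute)
      have "norm (y - c) \<le> norm (y - x) + norm (x - c)"
        using norm_triangle_ineq[of "y - x" "x - c"] by simp
      also have "norm (x - c) = \<delta>" unfolding cdef using n1 d0 by simp
      finally have "norm (y - c) \<le> \<epsilon>" using y by linarith
      hence c1: "y \<in> cball c \<epsilon>" by (simp add: dist_norm norm_minus_commute)
      have cs: "\<bar>(y - x) \<bullet> n\<bar> \<le> norm (y - x)"
        using Cauchy_Schwarz_ineq2[of "y - x" n] n1 by simp
      have "(y - (x - (\<delta> / 2) *\<^sub>R n)) \<bullet> n = (y - x) \<bullet> n + \<delta>/2"
        by (simp add: inner_diff_left inner_add_left nn algebra_simps)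
      hence "y \<in> Hj" unfolding Hj_def using cs y by simp
      with c1 show "y \<in> cball c \<epsilon> \<inter> Hj" by simp
    qed
  qed
  define xp where "xp = x_p Obs m r \<epsilon> a j x"
  define k where "k = a * \<epsilon> * sqrt 3 / 2"
  have xpd: "xp - c = (\<epsilon>/2) *\<^sub>R n + k *\<^sub>R Jrot n"
    unfolding xp_def x_p_def k_def c_def n_def by simp
  have a2: "a * a = 1" using assms(8) by auto
  have k2: "k * k = 3/4 * \<epsilon>^2" unfolding k_def using a2
    by (simp add: power2_eq_square field_simps)
  have "(norm (xp - c))^2 = (\<epsilon>/2)^2 * (n \<bullet> n) + k * k * (Jrot n \<bullet> Jrot n) + 2 * (\<epsilon>/2) * k * (Jrot n \<bullet> n)"
    unfolding xpd power2_norm_eq_inner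
    by (simp add: inner_add_left inner_add_right inner_commute algebra_simps power2_eq_square)
  also have "\<dots> = \<epsilon>^2" unfolding Jrot_inner nn k2 by (simp add: power2_eq_square)
  finally have nxp: "norm (xp - c) = \<epsilon>" using e
    using power2_eq_iff_nonneg[of "norm (xp - c)" \<epsilon>] by simp
  have "(xp - (x - (\<delta> / 2) *\<^sub>R n)) \<bullet> n = (xp - c) \<bullet> n + (c - x) \<bullet> n + \<delta>/2"
    by (simp add: inner_diff_left inner_add_left nn algebra_simps)
  also have "\<dots> = \<epsilon>/2 - \<delta> + \<delta>/2"
  proof -
    have "(xp - c) \<bullet> n = \<epsilon>/2" unfolding xpd by (simp add: inner_add_left nn Jrot_inner)
    moreover have "(c - x) \<bullet> n = - \<delta>" unfolding cdef by (simp add: nn)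
    ultimately show ?thesis by simp
  qed
  finally have "xp \<in> Hj" unfolding Hj_def using de by simp
  hence xpin: "xp \<in> cball c \<epsilon> \<inter> Hj" using nxp by (simp add: dist_norm norm_minus_commute)
  have "interior (cball c \<epsilon> \<inter> Hj) \<subseteq> ball c \<epsilon>"
    using interior_mono[of "cball c \<epsilon> \<inter> Hj" "cball c \<epsilon>"] by auto
  hence "xp \<notin> interior (cball c \<epsilon> \<inter> Hj)" using nxp by (auto simp: dist_norm norm_minus_commute)
  hence fr: "xp \<in> frontier (cball c \<epsilon> \<inter> Hj)"
    using xpin closure_subset unfolding frontier_def by blast
  show ?thesis
    using int fr eq unfolding xp_def Hj_def \<delta>_def n_def Dw by simp
qed
end
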